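(* Let $\mathcal{L}$ be a family of oriented balanced algebraic laws. Assume that for all $f,g$ in the positive geometry monoid $\mathcal{G}^+(\mathcal{L})$ there exist $f',g'\in\mathcal{G}^+(\mathcal{L})$ with $f\bullet g'=g\bullet f'$ and such that the domain of $f\bullet g'$ is the intersection of the domains of $f$ and $g$. Then the rewrite system $R^+_{\mathcal{L}}$ is confluent.
   Context: Terms over a signature $\Sigma$ and an infinite set of variables; addresses are finite sequences of positive integers, $t/\alpha$ the subterm at $\alpha$. A law is balanced if both sides contain the same variables. For an oriented law $L=(l,r)$ and an address $\alpha$, $O^+_{L,\alpha}$ is the partial map sending $t$ with $t/\alpha=l\sigma$ (for a substitution $\sigma$) to the term obtained by replacing that subterm by $r\sigma$. Operators act on the right and $f\bullet g$ means "$f$ then $g$". $\mathcal{G}^+(\mathcal{L})$ is the monoid of partial maps generated by all $O^+_{L,\alpha}$, $L\in\mathcal{L}$, $\alpha$ any address. $R^+_{\mathcal{L}}$ is the rewrite system with rules $l\to r$ for $(l,r)\in\mathcal{L}$ (applied to substitution instances in arbitrary subterms); writing $t\to^* t'$ when $t$ rewrites to $t'$ in finitely many (possibly zero) steps, $R^+_{\mathcal{L}}$ is confluent if whenever $t\to^*t'$ and $t\to^*t''$ there is $t'''$ with $t'\to^*t'''$ and $t''\to^*t'''$. *)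

theory Defs
  imports Main
begin

datatype ('f, 'v) trm = Var 'v | Fun 'f "('f, 'v) trm list"

fun wf_trm :: "('f \<Rightarrow> nat) \<Rightarrow> ('f, 'v) trm \<Rightarrow> bool" where
  "wf_trm ar (Var x) = True"
| "wf_trm ar (Fun f ts) = (length ts = ar f \<and> (\<forall>t\<in>set ts. wf_trm ar t))"

fun vars :: "('f, 'v) trm \<Rightarrow> 'v set" where
  "vars (Var x) = {x}"
| "vars (Fun f ts) = \<Union> (set (map vars ts))"

fun subst :: "('v \<Rightarrow> ('f, 'v) trm) \<Rightarrow> ('f, 'v) trm \<Rightarrow> ('f, 'v) trm" where
  "subst \<sigma> (Var x) = \<sigma> x"
| "subst \<sigma> (Fun f ts) = Fun f (map (subst \<sigma>) ts)"

text \<open>Addresses: lists of positive integers (1-based argument positions).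
  subterm t alpha = Some (t/alpha), or None if alpha is not an address of t.\<close>
primrec subterm :: "('f, 'v) trm \<Rightarrow> nat list \<Rightarrow> ('f, 'v) trm option" where
  "subterm t [] = Some t"
| "subterm t (i # \<alpha>) = (case t of Var x \<Rightarrow> None
      | Fun f ts \<Rightarrow> if 1 \<le> i \<and> i \<le> length ts then subterm (ts ! (i - 1)) \<alpha> else None)"

primrec replace :: "('f, 'v) trm \<Rightarrow> nat list \<Rightarrow> ('f, 'v) trm \<Rightarrow> ('f, 'v) trm" where
  "replace t [] s = s"
| "replace t (i # \<alpha>) s = (case t of Var x \<Rightarrow> Var x
      | Fun f ts \<Rightarrow> if 1 \<le> i \<and> i \<le> length ts
                   then Fun f (ts[i - 1 := replace (ts ! (i - 1)) \<alpha> s]) else Fun f ts)"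

type_synonym ('f, 'v) law = "('f, 'v) trm \<times> ('f, 'v) trm"

definition balanced :: "('f, 'v) law \<Rightarrow> bool" where
  "balanced L \<longleftrightarrow> vars (fst L) = vars (snd L)"

definition law_over :: "('f \<Rightarrow> nat) \<Rightarrow> ('f, 'v) law \<Rightarrow> bool" where
  "law_over ar L \<longleftrightarrow> wf_trm ar (fst L) \<and> wf_trm ar (snd L)"

definition seq :: "('a \<rightharpoonup> 'a) \<Rightarrow> ('a \<rightharpoonup> 'a) \<Rightarrow> ('a \<rightharpoonup> 'a)" (infixl "\<bullet>" 70) where
  "f \<bullet> g = (\<lambda>t. Option.bind (f t) g)"

definition opP :: "('f \<Rightarrow> nat) \<Rightarrow> ('f, 'v) law \<Rightarrow> nat list \<Rightarrow> ('f, 'v) trm \<rightharpoonup> ('f, 'v) trm" where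
  "opP ar L \<alpha> t = (if wf_trm ar t \<and> (\<exists>\<sigma>. subterm t \<alpha> = Some (subst \<sigma> (fst L)))
     then Some (replace t \<alpha> (subst (SOME \<sigma>. subterm t \<alpha> = Some (subst \<sigma> (fst L))) (snd L)))
     else None)"

definition idP :: "('f \<Rightarrow> nat) \<Rightarrow> ('f, 'v) trm \<rightharpoonup> ('f, 'v) trm" where
  "idP ar t = (if wf_trm ar t then Some t else None)"

inductive_set geomP :: "('f \<Rightarrow> nat) \<Rightarrow> ('f, 'v) law set \<Rightarrow> (('f, 'v) trm \<rightharpoonup> ('f, 'v) trm) set"
  for ar Ls where
  idI: "idP ar \<in> geomP ar Ls"
| stepI: "f \<in> geomP ar Ls \<Longrightarrow> L \<in> Ls \<Longrightarrow> f \<bullet> opP ar L \<alpha> \<in> geomP ar Ls"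

definition rstep :: "('f, 'v) law set \<Rightarrow> ('f, 'v) trm \<Rightarrow> ('f, 'v) trm \<Rightarrow> bool" where
  "rstep Ls t t' \<longleftrightarrow> (\<exists>L\<in>Ls. \<exists>\<alpha> \<sigma>. subterm t \<alpha> = Some (subst \<sigma> (fst L))
                         \<and> t' = replace t \<alpha> (subst \<sigma> (snd L)))"

definition confluent_on :: "('f \<Rightarrow> nat) \<Rightarrow> ('f, 'v) law set \<Rightarrow> bool" where
  "confluent_on ar Ls \<longleftrightarrow> (\<forall>t t' t''. wf_trm ar t \<longrightarrow> (rstep Ls)\<^sup>*\<^sup>* t t' \<longrightarrow> (rstep Ls)\<^sup>*\<^sup>* t t''
      \<longrightarrow> (\<exists>t'''. (rstep Ls)\<^sup>*\<^sup>* t' t''' \<and> (rstep Ls)\<^sup>*\<^sup>* t'' t'''))"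

end

theory Submission
  imports Defs
begin

lemma subst_agree: "(\<forall>x\<in>vars t. \<sigma> x = \<tau> x) \<Longrightarrow> subst \<sigma> t = subst \<tau> t"
  by (induction t) auto

lemma subst_eq_agree: "subst \<sigma> t = subst \<tau> t \<Longrightarrow> \<forall>x\<in>vars t. \<sigma> x = \<tau> x"
  by (induction t) (auto simp: map_eq_conv)

lemma wf_subst_vars: "wf_trm ar (subst \<sigma> t) \<Longrightarrow> \<forall>x\<in>vars t. wf_trm ar (\<sigma> x)"
  by (induction t) auto

lemma wf_subst: "wf_trm ar t \<Longrightarrow> \<forall>x\<in>vars t. wf_trm ar (\<sigma> x) \<Longrightarrow> wf_trm ar (subst \<sigma> t)"
  by (induction t) auto

lemma wf_subterm: "wf_trm ar t \<Longrightarrow> subterm t \<alpha> = Some s \<Longrightarrow> wf_trm ar s"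
proof (induction \<alpha> arbitrary: t)
  case Nil then show ?case by simp
next
  case (Cons i \<alpha>)
  show ?case
  proof (cases t)
    case (Fun f ts)
    with Cons.prems have i: "1 \<le> i" "i \<le> length ts" and st: "subterm (ts ! (i - 1)) \<alpha> = Some s"
      by (auto split: if_splits)
    have "ts ! (i - 1) \<in> set ts" using i by (intro nth_mem) arith
    then have "wf_trm ar (ts ! (i - 1))" using Cons.prems Fun by auto
    then show ?thesis using Cons.IH st by blast
  qed (use Cons.prems in auto)
qed

lemma wf_replace: "wf_trm ar t \<Longrightarrow> wf_trm ar s \<Longrightarrow> wf_trm ar (replace t \<alpha> s)"
proof (induction \<alpha> arbitrary: t)
  case Nil then show ?case by simp
next
  case (Cons i \<alpha>)
  show ?case
  proof (cases t)
    case (Var x) then show ?thesis by simp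
  next
    case (Fun f ts)
    show ?thesis
    proof (cases "1 \<le> i \<and> i \<le> length ts")
      case True
      have "wf_trm ar (replace (ts ! (i - 1)) \<alpha> s)"
        using Cons True Fun by auto
      moreover have "set (ts[i - 1 := replace (ts ! (i - 1)) \<alpha> s])
          \<subseteq> insert (replace (ts ! (i - 1)) \<alpha> s) (set ts)"
        by (rule set_update_subset_insert)
      ultimately show ?thesis using Fun True Cons.prems by auto
    next
      case False then show ?thesis using Fun Cons.prems by auto
    qed
  qed
qed

lemma step_wf:
  assumes "L \<in> Ls" "\<forall>L\<in>Ls. law_over ar L \<and> balanced L" "wf_trm ar t"
    "subterm t \<alpha> = Some (subst \<sigma> (fst L))"
  shows "wf_trm ar (replace t \<alpha> (subst \<sigma> (snd L)))"
proof -
  have w: "wf_trm ar (subst \<sigma> (fst L))" using wf_subterm assms by blast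
  have "\<forall>x\<in>vars (fst L). wf_trm ar (\<sigma> x)" using wf_subst_vars[OF w] .
  moreover have "vars (fst L) = vars (snd L)" "wf_trm ar (snd L)"
    using assms unfolding balanced_def law_over_def by auto
  ultimately have "wf_trm ar (subst \<sigma> (snd L))" using wf_subst by metis
  then show ?thesis using wf_replace assms by blast
qed

lemma geom_wf:
  assumes "f \<in> geomP ar Ls" "\<forall>L\<in>Ls. law_over ar L \<and> balanced L"
  shows "f t = Some s \<Longrightarrow> wf_trm ar t \<and> wf_trm ar s"
  using assms(1)
proof (induction arbitrary: s rule: geomP.induct)
  case idI then show ?case by (auto simp: idP_def split: if_splits)
next
  case (stepI f L \<alpha>)
  from stepI.prems obtain u where u: "f t = Some u" "opP ar L \<alpha> u = Some s"
    by (auto simp: seq_def split: Option.bind_splits)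
  from u(2) have ex: "wf_trm ar u" "\<exists>\<sigma>. subterm u \<alpha> = Some (subst \<sigma> (fst L))"
    and s: "s = replace u \<alpha> (subst (SOME \<sigma>. subterm u \<alpha> = Some (subst \<sigma> (fst L))) (snd L))"
    by (auto simp: opP_def split: if_splits)
  have "subterm u \<alpha> = Some (subst (SOME \<sigma>. subterm u \<alpha> = Some (subst \<sigma> (fst L))) (fst L))"
    using someI_ex[OF ex(2)] .
  then have "wf_trm ar s" using step_wf[OF stepI.hyps(2) assms(2) ex(1)] s by blast
  then show ?case using stepI.IH[OF u(1)] by blast
qed

lemma geom_rtc:
  assumes "f \<in> geomP ar Ls"
  shows "f t = Some s \<Longrightarrow> (rstep Ls)\<^sup>*\<^sup>* t s"
  using assms
proof (induction arbitrary: s rule: geomP.induct)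
  case idI then show ?case by (auto simp: idP_def split: if_splits)
next
  case (stepI f L \<alpha>)
  from stepI.prems obtain u where u: "f t = Some u" "opP ar L \<alpha> u = Some s"
    by (auto simp: seq_def split: Option.bind_splits)
  from u(2) have ex: "\<exists>\<sigma>. subterm u \<alpha> = Some (subst \<sigma> (fst L))"
    and s: "s = replace u \<alpha> (subst (SOME \<sigma>. subterm u \<alpha> = Some (subst \<sigma> (fst L))) (snd L))"
    by (auto simp: opP_def split: if_splits)
  have "rstep Ls u s" unfolding rstep_def using someI_ex[OF ex] s stepI.hyps(2) by blast
  then show ?case using stepI.IH[OF u(1)] by auto
qed

lemma rtc_geom:
  assumes "\<forall>L\<in>Ls. law_over ar L \<and> balanced L" "wf_trm ar t"
  shows "(rstep Ls)\<^sup>*\<^sup>* t s \<Longrightarrow> \<exists>f\<in>geomP ar Ls. f t = Some s"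
proof (induction rule: rtranclp_induct)
  case base
  have "idP ar t = Some t" using assms(2) by (simp add: idP_def)
  then show ?case using geomP.idI by blast
next
  case (step u s)
  from step(3) obtain f where f: "f \<in> geomP ar Ls" "f t = Some u" by blast
  have wu: "wf_trm ar u" using geom_wf[OF f(1) assms(1) f(2)] by blast
  from step(2) obtain L \<alpha> \<sigma> where L: "L \<in> Ls" "subterm u \<alpha> = Some (subst \<sigma> (fst L))"
    "s = replace u \<alpha> (subst \<sigma> (snd L))" unfolding rstep_def by blast
  define \<tau> where "\<tau> = (SOME \<sigma>. subterm u \<alpha> = Some (subst \<sigma> (fst L)))"
  have "subterm u \<alpha> = Some (subst \<tau> (fst L))" unfolding \<tau>_def
    using someI[of "\<lambda>\<sigma>. subterm u \<alpha> = Some (subst \<sigma> (fst L))" \<sigma>] L(2) by simp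
  then have "subst \<tau> (fst L) = subst \<sigma> (fst L)" using L(2) by simp
  then have "\<forall>x\<in>vars (fst L). \<tau> x = \<sigma> x" by (rule subst_eq_agree)
  moreover have "vars (fst L) = vars (snd L)" using assms(1) L(1) by (auto simp: balanced_def)
  ultimately have e: "subst \<tau> (snd L) = subst \<sigma> (snd L)" using subst_agree[of "snd L" \<tau> \<sigma>] by simp
  have c: "wf_trm ar u \<and> (\<exists>\<sigma>. subterm u \<alpha> = Some (subst \<sigma> (fst L)))" using wu L by blast
  have "opP ar L \<alpha> u = Some (replace u \<alpha> (subst \<tau> (snd L)))"
    unfolding opP_def \<tau>_def by (subst if_P[OF c]) (rule refl)
  then have "opP ar L \<alpha> u = Some s" using e L(3) by simp
  then have "(f \<bullet> opP ar L \<alpha>) t = Some s" using f(2) by (simp add: seq_def)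
  then show ?case using geomP.stepI[OF f(1) L(1)] by blast
qed

theorem proposition5p2:
  fixes ar :: "'f \<Rightarrow> nat" and Ls :: "('f, 'v) law set"
  assumes "infinite (UNIV :: 'v set)"
    and "\<forall>L\<in>Ls. law_over ar L \<and> balanced L"
    and "\<forall>f\<in>geomP ar Ls. \<forall>g\<in>geomP ar Ls. \<exists>f'\<in>geomP ar Ls. \<exists>g'\<in>geomP ar Ls.
           f \<bullet> g' = g \<bullet> f' \<and> dom (f \<bullet> g') = dom f \<inter> dom g"
  shows "confluent_on ar Ls"
  unfolding confluent_on_def
proof (intro allI impI)
  fix t t' t''
  assume wt: "wf_trm ar t" and r1: "(rstep Ls)\<^sup>*\<^sup>* t t'" and r2: "(rstep Ls)\<^sup>*\<^sup>* t t''"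
  obtain f where f: "f \<in> geomP ar Ls" "f t = Some t'" using rtc_geom[OF assms(2) wt r1] by blast
  obtain g where g: "g \<in> geomP ar Ls" "g t = Some t''" using rtc_geom[OF assms(2) wt r2] by blast
  have "\<exists>f'\<in>geomP ar Ls. \<exists>g'\<in>geomP ar Ls. f \<bullet> g' = g \<bullet> f' \<and> dom (f \<bullet> g') = dom f \<inter> dom g"
    using bspec[OF bspec[OF assms(3) f(1)] g(1)] .
  then obtain f' g' where fg: "f' \<in> geomP ar Ls" "g' \<in> geomP ar Ls" "f \<bullet> g' = g \<bullet> f'"
    "dom (f \<bullet> g') = dom f \<inter> dom g" by blast
  have "t \<in> dom f" "t \<in> dom g" using f(2) g(2) by (simp_all add: domI)
  then have "t \<in> dom (f \<bullet> g')" unfolding fg(4) by (rule IntI)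
  then obtain u where u: "(f \<bullet> g') t = Some u" by (auto simp del: seq_def)
  then have gu: "g' t' = Some u" using f(2) by (simp add: seq_def)
  from u have "(g \<bullet> f') t = Some u" unfolding fg(3) .
  then have fu: "f' t'' = Some u" using g(2) by (simp add: seq_def)
  have "(rstep Ls)\<^sup>*\<^sup>* t' u" by (rule geom_rtc[OF fg(2) gu])
  moreover have "(rstep Ls)\<^sup>*\<^sup>* t'' u" by (rule geom_rtc[OF fg(1) fu])
  ultimately show "\<exists>t'''. (rstep Ls)\<^sup>*\<^sup>* t' t''' \<and> (rstep Ls)\<^sup>*\<^sup>* t'' t'''" by blast
qed

end
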